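(* Let $\mathscr{H}$ be a complex Hilbert space and let $B,C$ be Hilbert–Schmidt operators on $\mathscr{H}$. Then $$w_{(2,e)}^2(B,C)\geq\frac14\,|\mathrm{tr}(B^2)+\mathrm{tr}(C^2)+2\,\mathrm{tr}(BC)|+\frac14\left(\|B\|_2^2+\|C\|_2^2+2\,\mathrm{Re}(\mathrm{tr}(BC^* ))\right),$$ where $\mathrm{Re}(z)$ denotes the real part of $z\in\mathbb{C}$.
   Context: An operator $T$ on $\mathscr{H}$ is Hilbert–Schmidt if $\sum_i\|Te_i\|^2<\infty$ for some (equivalently every) orthonormal basis $\{e_i\}$; its Hilbert–Schmidt norm is $\|T\|_2=(\sum_i\|Te_i\|^2)^{1/2}=(\mathrm{tr}(T^*T))^{1/2}$. For an operator $T$, $\Re(T)=\frac12(T+T^* )$. The Hilbert–Schmidt Euclidean operator radius is $w_{(2,e)}(B,C)=\sup_{\lambda_1,\lambda_2\in\mathbb{C},\ |\lambda_1|^2+|\lambda_2|^2\leq1}\sup_{\theta\in\mathbb{R}}\|\Re(e^{i\theta}(\lambda_1B+\lambda_2C))\|_2$. *)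

theory Defs
  imports "HOL-Analysis.Analysis"
begin

class scaleC =
  fixes scaleC :: "complex \<Rightarrow> 'a \<Rightarrow> 'a" (infixr \<open>*\<^sub>C\<close> 75)

class complex_vector = real_vector + scaleC +
  assumes scaleC_add_right: "a *\<^sub>C (x + y) = a *\<^sub>C x + a *\<^sub>C y"
    and scaleC_add_left: "(a + b) *\<^sub>C x = a *\<^sub>C x + b *\<^sub>C x"
    and scaleC_scaleC: "a *\<^sub>C (b *\<^sub>C x) = (a * b) *\<^sub>C x"
    and scaleC_one: "1 *\<^sub>C x = x"
    and scaleC_of_real: "(complex_of_real r) *\<^sub>C x = r *\<^sub>R x"

class complex_inner = complex_vector + real_normed_vector +
  fixes cinner :: "'a \<Rightarrow> 'a \<Rightarrow> complex"
  assumes cinner_commute: "cinner x y = cnj (cinner y x)"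
    and cinner_add_left: "cinner (x + y) z = cinner x z + cinner y z"
    and cinner_scaleC_left: "cinner (a *\<^sub>C x) y = cnj a * cinner x y"
    and cinner_self_real: "Im (cinner x x) = 0"
    and cinner_self_nonneg: "0 \<le> Re (cinner x x)"
    and cinner_self_eq_zero: "cinner x x = 0 \<longleftrightarrow> x = 0"
    and norm_eq_sqrt_cinner: "norm x = sqrt (Re (cinner x x))"

class chilbert_space = complex_inner + complete_space

instantiation complex :: chilbert_space
begin
definition scaleC_complex_def: "scaleC a (x::complex) = a * x"
definition cinner_complex_def: "cinner (x::complex) y = cnj x * y"
instance
proof
  fix x y z :: complex and a b :: complex and r :: real
  show "a *\<^sub>C (x + y) = a *\<^sub>C x + a *\<^sub>C y" by (simp add: scaleC_complex_def algebra_simps)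
  show "(a + b) *\<^sub>C x = a *\<^sub>C x + b *\<^sub>C x" by (simp add: scaleC_complex_def algebra_simps)
  show "a *\<^sub>C (b *\<^sub>C x) = (a * b) *\<^sub>C x" by (simp add: scaleC_complex_def algebra_simps)
  show "1 *\<^sub>C x = x" by (simp add: scaleC_complex_def)
  show "complex_of_real r *\<^sub>C x = r *\<^sub>R x" by (simp add: scaleC_complex_def scaleR_conv_of_real)
  show "cinner x y = cnj (cinner y x)" by (simp add: cinner_complex_def mult.commute)
  show "cinner (x + y) z = cinner x z + cinner y z" by (simp add: cinner_complex_def algebra_simps)
  show "cinner (a *\<^sub>C x) y = cnj a * cinner x y" by (simp add: cinner_complex_def scaleC_complex_def)
  show "Im (cinner x x) = 0" by (simp add: cinner_complex_def)
  show "0 \<le> Re (cinner x x)" by (simp add: cinner_complex_def)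
  show "(cinner x x = 0) = (x = 0)" by (simp add: cinner_complex_def)
  show "norm x = sqrt (Re (cinner x x))"
    by (simp add: cinner_complex_def cmod_def power2_eq_square)
qed
end

definition bounded_clinear :: "('a::complex_inner \<Rightarrow> 'a) \<Rightarrow> bool" where
  "bounded_clinear T \<longleftrightarrow>
     (\<forall>x y. T (x + y) = T x + T y) \<and> (\<forall>c x. T (c *\<^sub>C x) = c *\<^sub>C T x) \<and>
     (\<exists>K. \<forall>x. norm (T x) \<le> norm x * K)"

text \<open>The adjoint (exists and is unique for bounded operators on a Hilbert space).\<close>

definition adj :: "('a::complex_inner \<Rightarrow> 'a) \<Rightarrow> ('a \<Rightarrow> 'a)" where
  "adj T = (SOME S. \<forall>x y. cinner (T x) y = cinner x (S y))"

definition op_Re :: "('a::complex_inner \<Rightarrow> 'a) \<Rightarrow> ('a \<Rightarrow> 'a)" where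
  "op_Re T = (\<lambda>x. (1/2::complex) *\<^sub>C (T x + adj T x))"

definition is_onb :: "'a::complex_inner set \<Rightarrow> bool" where
  "is_onb E \<longleftrightarrow> (\<forall>e\<in>E. norm e = 1) \<and> (\<forall>e\<in>E. \<forall>f\<in>E. e \<noteq> f \<longrightarrow> cinner e f = 0) \<and>
     (\<forall>x. (\<forall>e\<in>E. cinner e x = 0) \<longrightarrow> x = 0)"

definition some_onb :: "'a::complex_inner set" where
  "some_onb = (SOME E. is_onb E)"

definition hilbert_schmidt :: "('a::complex_inner \<Rightarrow> 'a) \<Rightarrow> bool" where
  "hilbert_schmidt T \<longleftrightarrow> bounded_clinear T \<and>
     (\<exists>E. is_onb E \<and> (\<lambda>e. (norm (T e))\<^sup>2) summable_on E)"

definition hs_norm :: "('a::complex_inner \<Rightarrow> 'a) \<Rightarrow> real" where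
  "hs_norm T = sqrt (infsum (\<lambda>e. (norm (T e))\<^sup>2) some_onb)"

definition trace :: "('a::complex_inner \<Rightarrow> 'a) \<Rightarrow> complex" where
  "trace T = infsum (\<lambda>e. cinner e (T e)) some_onb"

definition w2e :: "('a::complex_inner \<Rightarrow> 'a) \<Rightarrow> ('a \<Rightarrow> 'a) \<Rightarrow> real" where
  "w2e B C = (SUP p \<in> {(l1, l2, \<theta>). (cmod l1)\<^sup>2 + (cmod l2)\<^sup>2 \<le> 1}.
      (case p of (l1, l2, \<theta>) \<Rightarrow>
        hs_norm (op_Re (\<lambda>x. exp (\<i> * complex_of_real \<theta>) *\<^sub>C (l1 *\<^sub>C B x + l2 *\<^sub>C C x)))))"

end

theory Submission
  imports Defs
begin


instance chilbert_space \<subseteq> banach ..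

lemma cinner_add_right: "cinner x (y + z) = cinner x y + cinner x z"
  by (metis cinner_commute cinner_add_left complex_cnj_add)

lemma cinner_scaleC_right: "cinner x (a *\<^sub>C y) = a * cinner x y"
  by (metis cinner_commute cinner_scaleC_left complex_cnj_cnj complex_cnj_mult)

lemma cinner_zero_left[simp]: "cinner 0 y = 0"
  using cinner_add_left[of 0 0 y] by simp

lemma cinner_zero_right[simp]: "cinner x 0 = 0"
  using cinner_add_right[of x 0 0] by simp

lemma cinner_minus_left: "cinner (- x) y = - cinner x y"
  using cinner_add_left[of x "-x" y] by (simp add: eq_neg_iff_add_eq_0 add.commute)

lemma cinner_minus_right: "cinner x (- y) = - cinner x y"
  using cinner_add_right[of x y "-y"] by (simp add: eq_neg_iff_add_eq_0 add.commute)

lemma cinner_diff_left: "cinner (x - y) z = cinner x z - cinner y z"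
  using cinner_add_left[of x "-y" z] by (simp add: cinner_minus_left)

lemma cinner_diff_right: "cinner x (y - z) = cinner x y - cinner x z"
  using cinner_add_right[of x y "-z"] by (simp add: cinner_minus_right)

lemma scaleR_scaleC: "r *\<^sub>R (x::'a::complex_vector) = complex_of_real r *\<^sub>C x"
  by (simp add: scaleC_of_real)

lemma cinner_scaleR_left: "cinner (r *\<^sub>R x) y = complex_of_real r * cinner x y"
  by (simp add: scaleR_scaleC cinner_scaleC_left)

lemma cinner_scaleR_right: "cinner x (r *\<^sub>R y) = complex_of_real r * cinner x y"
  by (simp add: scaleR_scaleC cinner_scaleC_right)

lemma cinner_sum_right: "cinner x (sum f F) = (\<Sum>i\<in>F. cinner x (f i))"
  by (induction F rule: infinite_finite_induct) (auto simp: cinner_add_right)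

lemma cinner_sum_left: "cinner (sum f F) x = (\<Sum>i\<in>F. cinner (f i) x)"
  by (induction F rule: infinite_finite_induct) (auto simp: cinner_add_left)

lemma cinner_self: "cinner x x = complex_of_real ((norm x)\<^sup>2)"
  using cinner_self_real[of x] cinner_self_nonneg[of x] norm_eq_sqrt_cinner[of x]
  by (simp add: complex_eq_iff)

lemma Re_cinner_self: "Re (cinner x x) = (norm x)\<^sup>2"
  by (simp add: cinner_self)

lemma norm_scaleC: "norm (a *\<^sub>C (x::'a::complex_inner)) = cmod a * norm x"
proof -
  have "cinner (a *\<^sub>C x) (a *\<^sub>C x) = (a * cnj a) * cinner x x"
    by (simp add: cinner_scaleC_left cinner_scaleC_right mult_ac)
  also have "\<dots> = complex_of_real ((cmod a * norm x)\<^sup>2)"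
    by (simp add: complex_norm_square[symmetric] cinner_self power_mult_distrib)
  finally have "(norm (a *\<^sub>C x))\<^sup>2 = (cmod a * norm x)\<^sup>2"
    by (metis Re_cinner_self Re_complex_of_real)
  then show ?thesis by (simp add: power2_eq_iff_nonneg)
qed

lemma norm_add_sq: "(norm (x + y))\<^sup>2 = (norm x)\<^sup>2 + (norm y)\<^sup>2 + 2 * Re (cinner x y)"
proof -
  have "cinner (x+y) (x+y) = cinner x x + cinner y y + cinner x y + cnj (cinner x y)"
    by (simp add: cinner_add_left cinner_add_right cinner_commute[of y x])
  then have "Re (cinner (x+y) (x+y)) = Re (cinner x x) + Re (cinner y y) + 2 * Re (cinner x y)"
    by simp
  then show ?thesis by (simp add: Re_cinner_self)
qed

lemma norm_diff_sq: "(norm (x - y))\<^sup>2 = (norm x)\<^sup>2 + (norm y)\<^sup>2 - 2 * Re (cinner x y)"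
  using norm_add_sq[of x "-y"] by (simp add: cinner_minus_right)

lemma cauchy_schwarz: "cmod (cinner x y) \<le> norm x * norm y"
proof (cases "y = 0")
  case True then show ?thesis by simp
next
  case False
  then have ny: "norm y > 0" by simp
  define t where "t = cinner y x / complex_of_real ((norm y)\<^sup>2)"
  have "0 \<le> (norm (x - t *\<^sub>C y))\<^sup>2" by simp
  also have "\<dots> = (norm x)\<^sup>2 + (cmod t)\<^sup>2 * (norm y)\<^sup>2 - 2 * Re (cinner x (t *\<^sub>C y))"
    by (simp add: norm_diff_sq norm_scaleC power_mult_distrib)
  also have "cinner x (t *\<^sub>C y) = t * cnj (cinner y x)"
    by (simp add: cinner_scaleC_right cinner_commute[of x y])
  also have "Re (t * cnj (cinner y x)) = (cmod (cinner y x))\<^sup>2 / (norm y)\<^sup>2"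
    unfolding t_def using ny
    by (simp add: complex_mult_cnj[symmetric] del: complex_mult_cnj)
       (simp add: Re_divide_of_real cmod_power2 flip: power2_eq_square)
  also have "(cmod t)\<^sup>2 = (cmod (cinner y x))\<^sup>2 / (norm y)^4"
    unfolding t_def by (simp add: norm_divide power_divide norm_power flip: power_mult)
  finally have "(cmod (cinner y x))\<^sup>2 \<le> (norm x)\<^sup>2 * (norm y)\<^sup>2"
    using ny by (simp add: field_simps power2_eq_square power4_eq_xxxx)
  then have "(cmod (cinner x y))\<^sup>2 \<le> (norm x * norm y)\<^sup>2"
    by (metis cinner_commute complex_mod_cnj power_mult_distrib)
  then show ?thesis by (simp add: power2_le_iff_abs_le)
qed

lemma bounded_linear_cinner_right: "bounded_linear (cinner x)"
proof
  show "cinner x (a + b) = cinner x a + cinner x b" for a b by (rule cinner_add_right)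
  show "cinner x (r *\<^sub>R b) = r *\<^sub>R cinner x b" for r b
    by (simp add: cinner_scaleR_right scaleR_conv_of_real)
  show "\<exists>K. \<forall>y. norm (cinner x y) \<le> norm y * K"
    by (metis cauchy_schwarz mult.commute)
qed

lemma cinner_ext: "(\<And>z. cinner z a = cinner z b) \<Longrightarrow> a = b"
  by (metis cinner_diff_right cinner_self_eq_zero eq_iff_diff_eq_0)



lemma onb_cinner:
  assumes "is_onb E" "e \<in> E" "f \<in> E"
  shows "cinner e f = (if e = f then 1 else 0)"
  using assms unfolding is_onb_def by (auto simp: cinner_self)

lemma onb_sum_coeff:
  assumes "is_onb E" "finite F" "F \<subseteq> E" "g \<in> E"
  shows "cinner g (\<Sum>f\<in>F. c f *\<^sub>C f) = (if g \<in> F then c g else 0)"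
proof -
  have "cinner g (\<Sum>f\<in>F. c f *\<^sub>C f) = (\<Sum>f\<in>F. c f * (if g = f then 1 else 0))"
    unfolding cinner_sum_right cinner_scaleC_right
    using assms by (intro sum.cong refl) (auto simp: onb_cinner)
  also have "\<dots> = (\<Sum>f\<in>F. if f = g then c f else 0)"
    by (intro sum.cong) auto
  also have "\<dots> = (if g \<in> F then c g else 0)"
    using assms(2) by (simp add: sum.delta')
  finally show ?thesis .
qed

lemma onb_sum_norm:
  assumes "is_onb E" "finite F" "F \<subseteq> E"
  shows "(norm (\<Sum>f\<in>F. c f *\<^sub>C f))\<^sup>2 = (\<Sum>f\<in>F. (cmod (c f))\<^sup>2)"
proof -
  let ?s = "\<Sum>f\<in>F. c f *\<^sub>C f"
  have "cinner ?s ?s = (\<Sum>g\<in>F. cnj (c g) * cinner g ?s)"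
    unfolding cinner_sum_left cinner_scaleC_left ..
  also have "\<dots> = (\<Sum>g\<in>F. complex_of_real ((cmod (c g))\<^sup>2))"
  proof (intro sum.cong refl)
    fix g assume g: "g \<in> F"
    then have "cinner g ?s = c g" using onb_sum_coeff[OF assms, of g c] assms(3) by auto
    then show "cnj (c g) * cinner g ?s = complex_of_real ((cmod (c g))\<^sup>2)"
      by (metis complex_norm_square mult.commute)
  qed
  finally have "cinner ?s ?s = complex_of_real (\<Sum>g\<in>F. (cmod (c g))\<^sup>2)" by simp
  then show ?thesis by (metis Re_cinner_self Re_complex_of_real)
qed

lemma bessel:
  assumes "is_onb E" "finite F" "F \<subseteq> E"
  shows "(\<Sum>f\<in>F. (cmod (cinner f x))\<^sup>2) \<le> (norm x)\<^sup>2"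
proof -
  let ?s = "\<Sum>f\<in>F. cinner f x *\<^sub>C f"
  have "cinner x ?s = (\<Sum>f\<in>F. cinner f x * cinner x f)"
    unfolding cinner_sum_right cinner_scaleC_right ..
  also have "\<dots> = (\<Sum>f\<in>F. complex_of_real ((cmod (cinner f x))\<^sup>2))"
    by (intro sum.cong refl) (metis cinner_commute complex_norm_square)
  finally have "Re (cinner x ?s) = (\<Sum>f\<in>F. (cmod (cinner f x))\<^sup>2)" by simp
  moreover have "0 \<le> (norm (x - ?s))\<^sup>2" by simp
  ultimately show ?thesis
    unfolding norm_diff_sq using onb_sum_norm[OF assms, of "\<lambda>f. cinner f x"] by simp
qed

lemma summable_by_sq:
  fixes f :: "'i \<Rightarrow> 'b::banach" and g :: "'i \<Rightarrow> real"
  assumes gs: "g summable_on A" and gnn: "\<And>x. x \<in> A \<Longrightarrow> g x \<ge> 0"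
    and bd: "\<And>G. finite G \<Longrightarrow> G \<subseteq> A \<Longrightarrow> (norm (sum f G))\<^sup>2 \<le> sum g G"
  shows "f summable_on A"
proof -
  from gs obtain L where lim: \<open>(sum g \<longlongrightarrow> L) (finite_subsets_at_top A)\<close>
    unfolding has_sum_def summable_on_def by blast
  have \<open>\<exists>P. eventually P (finite_subsets_at_top A) \<and>
              (\<forall>F F'. P F \<and> P F' \<longrightarrow> dist (sum f F) (sum f F') < e)\<close> if \<open>e>0\<close> for e
  proof -
    define d P where \<open>d = e\<^sup>2/16\<close> and \<open>P F \<longleftrightarrow> finite F \<and> F \<subseteq> A \<and> dist (sum g F) L < d\<close> for F
    have \<open>d > 0\<close>
      unfolding d_def using that by simp
    have ev_P: \<open>eventually P (finite_subsets_at_top A)\<close>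
      using lim
      by (auto simp add: P_def[abs_def] \<open>0 < d\<close> eventually_conj_iff eventually_finite_subsets_at_top_weakI tendsto_iff)
    moreover have \<open>dist (sum f F1) (sum f F2) < e\<close> if \<open>P F1\<close> and \<open>P F2\<close> for F1 F2
    proof -
      from ev_P
      obtain F' where \<open>finite F'\<close> and \<open>F' \<subseteq> A\<close> and P_sup_F': \<open>finite F \<and> F \<supseteq> F' \<and> F \<subseteq> A \<Longrightarrow> P F\<close> for F
        by atomize_elim (simp add: eventually_finite_subsets_at_top)
      define F where \<open>F = F' \<union> F1 \<union> F2\<close>
      have \<open>finite F\<close> and \<open>F \<subseteq> A\<close>
        using F_def P_def[abs_def] that \<open>finite F'\<close> \<open>F' \<subseteq> A\<close> by auto
      have dist_F: \<open>dist (sum g F) L < d\<close>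
        by (metis F_def \<open>F \<subseteq> A\<close> P_def P_sup_F' \<open>finite F\<close> le_supE order_refl)
      have dist_F_subset: \<open>dist (sum f F) (sum f F') < e/2\<close> if F': \<open>F' \<subseteq> F\<close> \<open>P F'\<close> for F'
      proof -
        have fin: "finite (F - F')" "F - F' \<subseteq> A" using \<open>finite F\<close> \<open>F \<subseteq> A\<close> by auto
        have \<open>dist (sum f F) (sum f F') = norm (sum f (F-F'))\<close>
          unfolding dist_norm using \<open>finite F\<close> F' by (subst sum_diff) auto
        then have \<open>(dist (sum f F) (sum f F'))\<^sup>2 = (norm (sum f (F-F')))\<^sup>2\<close> by simp
        moreover have \<open>(norm (sum f (F-F')))\<^sup>2 \<le> sum g (F - F')\<close> by (rule bd[OF fin])
        moreover have \<open>sum g (F - F') = sum g F - sum g F'\<close>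
          using \<open>finite F\<close> F' by (subst sum_diff) auto
        moreover have \<open>sum g F - sum g F' < 2 * d\<close>
          using dist_F F' unfolding P_def dist_norm real_norm_def by linarith
        ultimately have "(dist (sum f F) (sum f F'))\<^sup>2 < 2 * d" by linarith
        also have "2 * d < (e/2)\<^sup>2" unfolding d_def using \<open>e > 0\<close> by (simp add: power_divide)
        finally show ?thesis using \<open>e > 0\<close>
          by (metis power_less_imp_less_base less_eq_real_def divide_pos_pos zero_less_numeral)
      qed
      have \<open>dist (sum f F1) (sum f F2) \<le> dist (sum f F) (sum f F1) + dist (sum f F) (sum f F2)\<close>
        by (rule dist_triangle3)
      also have \<open>\<dots> < e/2 + e/2\<close>
        by (intro add_strict_mono dist_F_subset that) (auto simp: F_def)
      finally show \<open>dist (sum f F1) (sum f F2) < e\<close> by simp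
    qed
    ultimately show ?thesis
      by blast
  qed
  then have \<open>cauchy_filter (filtermap (sum f) (finite_subsets_at_top A))\<close>
    by (simp add: cauchy_filter_metric_filtermap)
  moreover have "complete (UNIV::'b set)"
    by (meson Cauchy_convergent UNIV_I complete_def convergent_def)
  ultimately obtain L' where \<open>(sum f \<longlongrightarrow> L') (finite_subsets_at_top A)\<close>
    using complete_uniform[where S=UNIV] by (force simp add: filterlim_def)
  then show ?thesis
    using summable_on_def has_sum_def by blast
qed

lemma coeff_sq_summable:
  assumes "is_onb E"
  shows "(\<lambda>f. (cmod (cinner f x))\<^sup>2) summable_on E"
  by (rule nonneg_bdd_above_summable_on) (auto intro!: bdd_aboveI[where M="(norm x)\<^sup>2"] bessel[OF assms])

lemma orth_summable:
  fixes E :: "'a::chilbert_space set"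
  assumes "is_onb E" and cs: "(\<lambda>f. (cmod (c f))\<^sup>2) summable_on E"
  shows "(\<lambda>f. c f *\<^sub>C f) summable_on E"
  by (rule summable_by_sq[OF cs]) (auto simp: onb_sum_norm[OF assms(1)])

lemma has_sum_single_point:
  assumes "g \<in> E" "\<And>f. f \<in> E \<Longrightarrow> f \<noteq> g \<Longrightarrow> h f = 0"
  shows "(h has_sum h g) E"
proof -
  have "(h has_sum h g) {g}" using has_sum_finite[of "{g}" h] by simp
  then show ?thesis using assms by (subst (asm) has_sum_cong_neutral[of _ _ h]) auto
qed

lemma onb_expansion:
  fixes E :: "'a::chilbert_space set"
  assumes onb: "is_onb E"
  shows "((\<lambda>f. cinner f x *\<^sub>C f) has_sum x) E"
proof -
  obtain y where y: "((\<lambda>f. cinner f x *\<^sub>C f) has_sum y) E"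
    using orth_summable[OF onb coeff_sq_summable[OF onb, of x]] unfolding summable_on_def by blast
  have "cinner g (x - y) = 0" if g: "g \<in> E" for g
  proof -
    have "((\<lambda>f. cinner g (cinner f x *\<^sub>C f)) has_sum cinner g y) E"
      by (rule has_sum_bounded_linear[OF bounded_linear_cinner_right y])
    moreover have "((\<lambda>f. cinner g (cinner f x *\<^sub>C f)) has_sum cinner g x) E"
    proof -
      have z: "cinner g (cinner f x *\<^sub>C f) = 0" if "f \<in> E" "f \<noteq> g" for f
      proof -
        have "cinner g f = 0" using onb_cinner[OF onb g that(1)] that(2) by simp
        then show ?thesis by (simp add: cinner_scaleC_right)
      qed
      have "((\<lambda>f. cinner g (cinner f x *\<^sub>C f)) has_sum cinner g (cinner g x *\<^sub>C g)) E"
        by (rule has_sum_single_point[OF g z])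
      moreover have "cinner g (cinner g x *\<^sub>C g) = cinner g x"
        using onb_cinner[OF onb g g] by (simp add: cinner_scaleC_right)
      ultimately show ?thesis by simp
    qed
    ultimately have "cinner g y = cinner g x" by (rule has_sum_unique)
    then show ?thesis by (simp add: cinner_diff_right)
  qed
  then have "x - y = 0" using onb unfolding is_onb_def by blast
  then show ?thesis using y by simp
qed

lemma parseval_polar:
  fixes E :: "'a::chilbert_space set"
  assumes "is_onb E"
  shows "((\<lambda>f. cinner x f * cinner f y) has_sum cinner x y) E"
proof -
  have "((\<lambda>f. cinner x (cinner f y *\<^sub>C f)) has_sum cinner x y) E"
    by (rule has_sum_bounded_linear[OF bounded_linear_cinner_right onb_expansion[OF assms]])
  moreover have "cinner x (cinner f y *\<^sub>C f) = cinner x f * cinner f y" for f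
    by (simp add: cinner_scaleC_right mult.commute)
  ultimately show ?thesis by simp
qed

lemma parseval:
  fixes E :: "'a::chilbert_space set"
  assumes "is_onb E"
  shows "((\<lambda>f. (cmod (cinner f x))\<^sup>2) has_sum (norm x)\<^sup>2) E"
proof -
  have eq: "cinner x f * cinner f x = complex_of_real ((cmod (cinner f x))\<^sup>2)" for f
    by (metis cinner_commute complex_norm_square mult.commute)
  have "((\<lambda>f. complex_of_real ((cmod (cinner f x))\<^sup>2)) has_sum cinner x x) E"
    using parseval_polar[OF assms, of x x] unfolding eq .
  then have "((\<lambda>f. complex_of_real ((cmod (cinner f x))\<^sup>2)) has_sum complex_of_real ((norm x)\<^sup>2)) E"
    by (simp only: cinner_self)
  then show ?thesis by (simp only: has_sum_of_real_iff)
qed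



definition adjoint_pair :: "('a::complex_inner \<Rightarrow> 'a) \<Rightarrow> ('a \<Rightarrow> 'a) \<Rightarrow> bool" where
  "adjoint_pair X Xa \<longleftrightarrow> (\<forall>x y. cinner (X x) y = cinner x (Xa y))"

definition hs_on :: "'a::complex_inner set \<Rightarrow> ('a \<Rightarrow> 'a) \<Rightarrow> bool" where
  "hs_on E X \<longleftrightarrow> (\<lambda>e. (norm (X e))\<^sup>2) summable_on E"

lemma adjoint_pair_sym: "adjoint_pair X Xa \<Longrightarrow> adjoint_pair Xa X"
  unfolding adjoint_pair_def by (metis cinner_commute)

lemma adjoint_pair_adj: "adjoint_pair X Xa \<Longrightarrow> adjoint_pair X (adj X)"
  unfolding adjoint_pair_def adj_def
proof -
  assume "\<forall>x y. cinner (X x) y = cinner x (Xa y)"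
  then show "\<forall>x y. cinner (X x) y = cinner x ((SOME S. \<forall>x y. cinner (X x) y = cinner x (S y)) y)"
    by (rule someI[where P="\<lambda>S. \<forall>x y. cinner (X x) y = cinner x (S y)"])
qed

lemma nonneg_swap:
  fixes a :: "'x \<Rightarrow> 'y \<Rightarrow> real"
  assumes nn: "\<And>x y. x \<in> A \<Longrightarrow> y \<in> B \<Longrightarrow> a x y \<ge> 0"
    and r: "\<And>x. x \<in> A \<Longrightarrow> ((a x) has_sum g x) B" and g: "(g has_sum s) A"
    and c: "\<And>y. y \<in> B \<Longrightarrow> ((\<lambda>x. a x y) has_sum h y) A"
  shows "(h has_sum s) B"
proof -
  have sm: "(\<lambda>(x,y). a x y) summable_on Sigma A (\<lambda>_. B)"
    by (rule summable_on_SigmaI[where g=g]) (use r g nn in \<open>auto simp: summable_on_def\<close>)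
  have "((\<lambda>(x,y). a x y) has_sum s) (Sigma A (\<lambda>_. B))"
    by (rule has_sum_SigmaI[where g=g]) (use r g sm in auto)
  then have "((\<lambda>(y,x). a x y) has_sum s) (B \<times> A)"
    by (subst (asm) has_sum_swap) simp
  then show ?thesis
    by (rule has_sum_SigmaD) (use c in auto)
qed

lemma hs_transfer:
  fixes X :: "'a::chilbert_space \<Rightarrow> 'a"
  assumes E1: "is_onb E1" and E2: "is_onb E2" and adj: "adjoint_pair X Xa"
    and s: "((\<lambda>e. (norm (X e))\<^sup>2) has_sum s) E1"
  shows "((\<lambda>g. (norm (Xa g))\<^sup>2) has_sum s) E2"
proof (rule nonneg_swap[where a="\<lambda>e g. (cmod (cinner g (X e)))\<^sup>2"])
  show "((\<lambda>g. (cmod (cinner g (X e)))\<^sup>2) has_sum (norm (X e))\<^sup>2) E2" for e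
    by (rule parseval[OF E2])
  show "((\<lambda>e. (cmod (cinner g (X e)))\<^sup>2) has_sum (norm (Xa g))\<^sup>2) E1" for g
  proof -
    have "cmod (cinner g (X e)) = cmod (cinner e (Xa g))" for e
      using adj unfolding adjoint_pair_def by (metis cinner_commute complex_mod_cnj)
    then show ?thesis using parseval[OF E1, of "Xa g"] by simp
  qed
qed (use s in auto)

lemma bounded_clinear_add: "bounded_clinear S \<Longrightarrow> S (x + y) = S x + S y"
  unfolding bounded_clinear_def by blast

lemma bounded_clinear_scaleC: "bounded_clinear S \<Longrightarrow> S (a *\<^sub>C x) = a *\<^sub>C S x"
  unfolding bounded_clinear_def by blast

lemma bounded_clinear_bounded_linear:
  assumes "bounded_clinear S" shows "bounded_linear S"
proof
  show "S (x + y) = S x + S y" for x y using assms by (rule bounded_clinear_add)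
  show "S (r *\<^sub>R x) = r *\<^sub>R S x" for r x
    using bounded_clinear_scaleC[OF assms] by (simp add: scaleR_scaleC)
  show "\<exists>K. \<forall>x. norm (S x) \<le> norm x * K" using assms unfolding bounded_clinear_def by blast
qed

lemma bounded_linear_cinner_left: "bounded_linear (\<lambda>v. cinner v y)"
proof
  show "cinner (a + b) y = cinner a y + cinner b y" for a b by (rule cinner_add_left)
  show "cinner (r *\<^sub>R b) y = r *\<^sub>R cinner b y" for r b
    by (simp add: cinner_scaleR_left scaleR_conv_of_real)
  show "\<exists>K. \<forall>v. norm (cinner v y) \<le> norm v * K"
    using cauchy_schwarz by blast
qed

lemma adj_exists:
  fixes S :: "'a::chilbert_space \<Rightarrow> 'a"
  assumes onb: "is_onb E" and bc: "bounded_clinear S" and hs: "hs_on E S"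
  shows "adjoint_pair S (adj S)"
proof -
  define Sa where "Sa y = infsum (\<lambda>f. cinner (S f) y *\<^sub>C f) E" for y
  have "cinner (S x) y = cinner x (Sa y)" for x y
  proof -
    have sq: "(\<lambda>f. (cmod (cinner (S f) y))\<^sup>2) summable_on E"
    proof (rule summable_on_comparison_test)
      show "(\<lambda>f. (norm (S f))\<^sup>2 * (norm y)\<^sup>2) summable_on E"
        using hs unfolding hs_on_def by (rule summable_on_cmult_left)
      show "(cmod (cinner (S f) y))\<^sup>2 \<le> (norm (S f))\<^sup>2 * (norm y)\<^sup>2" for f
        by (metis cauchy_schwarz norm_ge_zero power_mono power_mult_distrib)
    qed auto
    have h1: "((\<lambda>f. cinner (S f) y *\<^sub>C f) has_sum Sa y) E"
      unfolding Sa_def using orth_summable[OF onb sq] by (rule has_sum_infsum)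
    have a1: "((\<lambda>f. cinner x (cinner (S f) y *\<^sub>C f)) has_sum cinner x (Sa y)) E"
      by (rule has_sum_bounded_linear[OF bounded_linear_cinner_right h1])
    have h2: "((\<lambda>f. S (cinner f x *\<^sub>C f)) has_sum S x) E"
      by (rule has_sum_bounded_linear[OF bounded_clinear_bounded_linear[OF bc] onb_expansion[OF onb]])
    have a2: "((\<lambda>f. cinner (S (cinner f x *\<^sub>C f)) y) has_sum cinner (S x) y) E"
      by (rule has_sum_bounded_linear[OF bounded_linear_cinner_left h2])
    have "cinner (S (cinner f x *\<^sub>C f)) y = cinner x (cinner (S f) y *\<^sub>C f)" for f
      by (simp add: bounded_clinear_scaleC[OF bc] cinner_scaleC_left cinner_scaleC_right
          cinner_commute[of f x] mult.commute)
    with a2 have "((\<lambda>f. cinner x (cinner (S f) y *\<^sub>C f)) has_sum cinner (S x) y) E" by simp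
    with a1 show ?thesis by (metis has_sum_unique)
  qed
  then have "adjoint_pair S Sa" unfolding adjoint_pair_def by blast
  then show ?thesis by (rule adjoint_pair_adj)
qed



lemma two_mult_le_sq: "2 * (x::real) * y \<le> x\<^sup>2 + y\<^sup>2"
proof -
  have "0 \<le> (x - y)\<^sup>2" by simp
  then show ?thesis by (simp add: power2_diff)
qed

lemma mult_le_half_sq: "(x::real) * y \<le> (x\<^sup>2 + y\<^sup>2) / 2"
  using two_mult_le_sq[of x y] by (simp add: field_simps)

lemma trace_swap:
  fixes X Y :: "'a::chilbert_space \<Rightarrow> 'a"
  assumes onb: "is_onb E" and aX: "adjoint_pair X Xa" and aY: "adjoint_pair Y Ya"
    and hX: "hs_on E X" and hY: "hs_on E Ya"
  shows "\<exists>t. ((\<lambda>e. cinner e (X (Y e))) has_sum t) E \<and> ((\<lambda>e. cinner e (Y (X e))) has_sum t) E"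
proof -
  have aX': "cinner (X u) v = cinner u (Xa v)" for u v using aX unfolding adjoint_pair_def by blast
  have aY': "cinner (Y u) v = cinner u (Ya v)" for u v using aY unfolding adjoint_pair_def by blast
  define q where "q e f = cinner e (X f) * cinner (Ya f) e" for e f
  have inner1: "((\<lambda>f. q e f) has_sum cinner e (X (Y e))) E" for e
  proof -
    have "((\<lambda>f. cinner (Xa e) f * cinner f (Y e)) has_sum cinner (Xa e) (Y e)) E"
      by (rule parseval_polar[OF onb])
    moreover have "cinner (Xa e) f = cinner e (X f)" for f
      by (metis aX' cinner_commute)
    moreover have "cinner f (Y e) = cinner (Ya f) e" for f
      by (metis aY' cinner_commute)
    moreover have "cinner (Xa e) (Y e) = cinner e (X (Y e))"
      by (metis aX' cinner_commute)
    ultimately show ?thesis unfolding q_def by simp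
  qed
  have inner2: "((\<lambda>e. q e f) has_sum cinner f (Y (X f))) E" for f
  proof -
    have "((\<lambda>e. cinner (Ya f) e * cinner e (X f)) has_sum cinner (Ya f) (X f)) E"
      by (rule parseval_polar[OF onb])
    moreover have "cinner (Ya f) (X f) = cinner f (Y (X f))"
      by (metis aY' cinner_commute)
    ultimately show ?thesis unfolding q_def by (simp add: mult.commute)
  qed
  define m1 where "m1 p = (cmod (cinner (snd p) (X (fst p))))\<^sup>2" for p
  define m2 where "m2 p = (cmod (cinner (Ya (fst p)) (snd p)))\<^sup>2" for p
  have n1: "m1 summable_on Sigma E (\<lambda>_. E)"
  proof (rule summable_on_SigmaI[where g="\<lambda>f. (norm (X f))\<^sup>2"])
    show "((\<lambda>e. m1 (f, e)) has_sum (norm (X f))\<^sup>2) E" for f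
      unfolding m1_def using parseval[OF onb, of "X f"] by simp
    show "(\<lambda>f. (norm (X f))\<^sup>2) summable_on E" using hX by (simp add: hs_on_def)
    show "0 \<le> m1 (f, e)" for f e by (simp add: m1_def)
  qed
  have n2: "m2 summable_on Sigma E (\<lambda>_. E)"
  proof (rule summable_on_SigmaI[where g="\<lambda>f. (norm (Ya f))\<^sup>2"])
    show "((\<lambda>e. m2 (f, e)) has_sum (norm (Ya f))\<^sup>2) E" for f
    proof -
      have "m2 (f, e) = (cmod (cinner e (Ya f)))\<^sup>2" for e
        unfolding m2_def by (metis cinner_commute complex_mod_cnj fst_conv snd_conv)
      then show ?thesis using parseval[OF onb, of "Ya f"] by simp
    qed
    show "(\<lambda>f. (norm (Ya f))\<^sup>2) summable_on E" using hY by (simp add: hs_on_def)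
    show "0 \<le> m2 (f, e)" for f e by (simp add: m2_def)
  qed
  define Q where "Q p = q (snd p) (fst p)" for p
  have "(\<lambda>p. norm (Q p)) summable_on Sigma E (\<lambda>_. E)"
  proof (rule summable_on_comparison_test)
    show "(\<lambda>p. (m1 p + m2 p) / 2) summable_on Sigma E (\<lambda>_. E)"
      using summable_on_cmult_left[OF summable_on_add[OF n1 n2], of "1/2"] by simp
    show "norm (Q p) \<le> (m1 p + m2 p) / 2" for p
    proof -
      have "norm (Q p) = cmod (cinner (snd p) (X (fst p))) * cmod (cinner (Ya (fst p)) (snd p))"
        unfolding Q_def q_def by (simp add: norm_mult)
      then show ?thesis unfolding m1_def m2_def
        using mult_le_half_sq[of "cmod (cinner (snd p) (X (fst p)))" "cmod (cinner (Ya (fst p)) (snd p))"]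
        by linarith
    qed
    show "0 \<le> norm (Q p)" for p by simp
  qed
  then have "Q summable_on Sigma E (\<lambda>_. E)"
    by (rule abs_summable_summable)
  then obtain t where t: "(Q has_sum t) (Sigma E (\<lambda>_. E))"
    unfolding summable_on_def by blast
  have i2: "((\<lambda>e. Q (f, e)) has_sum cinner f (Y (X f))) E" for f
    unfolding Q_def using inner2[of f] by simp
  have r2: "((\<lambda>f. cinner f (Y (X f))) has_sum t) E"
    by (rule has_sum_SigmaD[OF t i2])
  have t': "((\<lambda>(x,y). Q (y,x)) has_sum t) (E \<times> E)"
    using t by (rule has_sum_swap[THEN iffD1])
  have i1: "((\<lambda>f. (\<lambda>(x,y). Q (y,x)) (e, f)) has_sum cinner e (X (Y e))) E" for e
    unfolding Q_def using inner1[of e] by simp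
  have r1: "((\<lambda>e. cinner e (X (Y e))) has_sum t) E"
    by (rule has_sum_SigmaD[OF t' i1])
  from r1 r2 show ?thesis by blast
qed

lemma hs_bundle:
  fixes B :: "'a::chilbert_space \<Rightarrow> 'a"
  assumes "hilbert_schmidt B"
  shows "is_onb (some_onb::'a set)" and "bounded_clinear B"
    and "adjoint_pair B (adj B)" and "adjoint_pair (adj B) B"
    and "((\<lambda>e. (norm (B e))\<^sup>2) has_sum (hs_norm B)\<^sup>2) some_onb"
    and "hs_on some_onb B" and "hs_on some_onb (adj B)"
proof -
  obtain E0 :: "'a set" where E0: "is_onb E0" and s0: "(\<lambda>e. (norm (B e))\<^sup>2) summable_on E0"
    and bc: "bounded_clinear B"
    using assms unfolding hilbert_schmidt_def by blast
  show onb: "is_onb (some_onb::'a set)" unfolding some_onb_def using E0 by (rule someI)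
  show "bounded_clinear B" by (rule bc)
  show adj: "adjoint_pair B (adj B)" using E0 bc s0 by (intro adj_exists) (auto simp: hs_on_def)
  show adj': "adjoint_pair (adj B) B" using adj by (rule adjoint_pair_sym)
  define s where "s = infsum (\<lambda>e. (norm (B e))\<^sup>2) E0"
  have hs0: "((\<lambda>e. (norm (B e))\<^sup>2) has_sum s) E0" unfolding s_def using s0 by simp
  have h1: "((\<lambda>e. (norm (adj B e))\<^sup>2) has_sum s) some_onb"
    by (rule hs_transfer[OF E0 onb adj hs0])
  have h2: "((\<lambda>e. (norm (B e))\<^sup>2) has_sum s) some_onb"
    by (rule hs_transfer[OF onb onb adj' h1])
  have "s \<ge> 0" using hs0 by (rule has_sum_nonneg) simp
  moreover have "hs_norm B = sqrt s" unfolding hs_norm_def using h2 by (simp add: infsumI)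
  ultimately have "(hs_norm B)\<^sup>2 = s" by simp
  then show "((\<lambda>e. (norm (B e))\<^sup>2) has_sum (hs_norm B)\<^sup>2) some_onb" using h2 by simp
  then show "hs_on some_onb B" unfolding hs_on_def summable_on_def by blast
  show "hs_on some_onb (adj B)" using h1 unfolding hs_on_def summable_on_def by blast
qed



lemma scaleC_commute: "a *\<^sub>C (b *\<^sub>C (x::'a::complex_vector)) = b *\<^sub>C (a *\<^sub>C x)"
  by (simp add: scaleC_scaleC mult.commute)

lemma norm_sq_add_le: "(norm (a + b))\<^sup>2 \<le> 2 * ((norm a)\<^sup>2 + (norm (b::'a::complex_inner))\<^sup>2)"
  using norm_add_sq[of a b] norm_diff_sq[of a b] by (smt (verit) zero_le_power2)

lemma bc_comb:
  fixes B C :: "'a::complex_inner \<Rightarrow> 'a"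
  assumes bB: "bounded_clinear B" and bC: "bounded_clinear C"
  shows "bounded_clinear (\<lambda>x. a *\<^sub>C (l1 *\<^sub>C B x + l2 *\<^sub>C C x))"
  unfolding bounded_clinear_def
proof (intro conjI allI)
  show "a *\<^sub>C (l1 *\<^sub>C B (x + y) + l2 *\<^sub>C C (x + y)) =
        a *\<^sub>C (l1 *\<^sub>C B x + l2 *\<^sub>C C x) + a *\<^sub>C (l1 *\<^sub>C B y + l2 *\<^sub>C C y)" for x y
    by (simp add: bounded_clinear_add[OF bB] bounded_clinear_add[OF bC] scaleC_add_right add_ac)
  show "a *\<^sub>C (l1 *\<^sub>C B (c *\<^sub>C x) + l2 *\<^sub>C C (c *\<^sub>C x)) = c *\<^sub>C a *\<^sub>C (l1 *\<^sub>C B x + l2 *\<^sub>C C x)" for c x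
    by (simp add: bounded_clinear_scaleC[OF bB] bounded_clinear_scaleC[OF bC] scaleC_add_right
        scaleC_commute[of l1 c] scaleC_commute[of l2 c] scaleC_commute[of a c])
  obtain KB where KB: "\<And>x. norm (B x) \<le> norm x * KB" using bB unfolding bounded_clinear_def by blast
  obtain KC where KC: "\<And>x. norm (C x) \<le> norm x * KC" using bC unfolding bounded_clinear_def by blast
  show "\<exists>K. \<forall>x. norm (a *\<^sub>C (l1 *\<^sub>C B x + l2 *\<^sub>C C x)) \<le> norm x * K"
  proof (intro exI allI)
    fix x
    have "norm (a *\<^sub>C (l1 *\<^sub>C B x + l2 *\<^sub>C C x)) = cmod a * norm (l1 *\<^sub>C B x + l2 *\<^sub>C C x)"
      by (rule norm_scaleC)
    also have "\<dots> \<le> cmod a * (cmod l1 * norm (B x) + cmod l2 * norm (C x))"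
      by (intro mult_left_mono) (auto intro: order.trans[OF norm_triangle_ineq] simp: norm_scaleC)
    also have "\<dots> \<le> cmod a * (cmod l1 * (norm x * KB) + cmod l2 * (norm x * KC))"
      by (intro mult_left_mono add_mono KB KC) auto
    also have "\<dots> = norm x * (cmod a * (cmod l1 * KB + cmod l2 * KC))"
      by (simp add: algebra_simps)
    finally show "norm (a *\<^sub>C (l1 *\<^sub>C B x + l2 *\<^sub>C C x)) \<le> norm x * (cmod a * (cmod l1 * KB + cmod l2 * KC))" .
  qed
qed

lemma Re_rot:
  fixes Z :: complex
  shows "Re ((exp (\<i> * complex_of_real (- Arg Z / 2)))\<^sup>2 * Z) = cmod Z"
proof -
  have e: "exp (\<i> * complex_of_real (- Arg Z / 2)) = cis (- Arg Z / 2)"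
    by (simp only: cis_conv_exp)
  have "(cis (- Arg Z / 2))^2 = cis (- Arg Z / 2 + - Arg Z / 2)"
    by (simp only: power2_eq_square cis_mult)
  then have "(exp (\<i> * complex_of_real (- Arg Z / 2)))\<^sup>2 = cis (- Arg Z)"
    unfolding e by simp
  moreover have "Z = complex_of_real (cmod Z) * cis (Arg Z)"
    by (metis rcis_cmod_Arg rcis_def)
  ultimately have "(exp (\<i> * complex_of_real (- Arg Z / 2)))\<^sup>2 * Z = complex_of_real (cmod Z) * (cis (- Arg Z) * cis (Arg Z))"
    by (metis mult.left_commute)
  also have "\<dots> = complex_of_real (cmod Z)" by (simp add: cis_mult)
  finally show ?thesis by simp
qed



lemma comb_facts:
  fixes B C :: "'a::chilbert_space \<Rightarrow> 'a"
  assumes hB: "hilbert_schmidt B" and hC: "hilbert_schmidt C"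
    and a: "cmod a \<le> 1" and l1: "cmod l1 \<le> 1" and l2: "cmod l2 \<le> 1"
    and S: "S = (\<lambda>x. a *\<^sub>C (l1 *\<^sub>C B x + l2 *\<^sub>C C x))"
  shows "bounded_clinear S" and "hs_on some_onb S" and "adjoint_pair S (adj S)"
    and "\<And>x. (norm (S x))\<^sup>2 \<le> 2 * ((norm (B x))\<^sup>2 + (norm (C x))\<^sup>2)"
proof -
  note onb = hs_bundle(1)[OF hB]
  show bc: "bounded_clinear S"
    unfolding S by (rule bc_comb[OF hs_bundle(2)[OF hB] hs_bundle(2)[OF hC]])
  show pw: "(norm (S x))\<^sup>2 \<le> 2 * ((norm (B x))\<^sup>2 + (norm (C x))\<^sup>2)" for x
  proof -
    have "norm (S x) = cmod a * norm (l1 *\<^sub>C B x + l2 *\<^sub>C C x)"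
      unfolding S by (rule norm_scaleC)
    also have "\<dots> \<le> norm (l1 *\<^sub>C B x + l2 *\<^sub>C C x)"
      using a by (simp add: mult_left_le_one_le)
    also have "\<dots> \<le> cmod l1 * norm (B x) + cmod l2 * norm (C x)"
      by (rule order.trans[OF norm_triangle_ineq]) (simp add: norm_scaleC)
    also have "\<dots> \<le> norm (B x) + norm (C x)"
      using l1 l2 by (intro add_mono) (simp_all add: mult_left_le_one_le)
    finally have "norm (S x) \<le> norm (B x) + norm (C x)" .
    then have "(norm (S x))\<^sup>2 \<le> (norm (B x) + norm (C x))\<^sup>2"
      by (simp add: power_mono)
    also have "\<dots> \<le> 2 * ((norm (B x))\<^sup>2 + (norm (C x))\<^sup>2)"
      using mult_le_half_sq[of "norm (B x)" "norm (C x)"] by (simp add: power2_sum)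
    finally show ?thesis .
  qed
  show hs: "hs_on some_onb S"
    unfolding hs_on_def
  proof (rule summable_on_comparison_test)
    show "(\<lambda>x. 2 * ((norm (B x))\<^sup>2 + (norm (C x))\<^sup>2)) summable_on some_onb"
      using hs_bundle(6)[OF hB] hs_bundle(6)[OF hC] unfolding hs_on_def
      by (intro summable_on_cmult_right summable_on_add)
  qed (use pw in auto)
  show "adjoint_pair S (adj S)" by (rule adj_exists[OF onb bc hs])
qed

lemma op_Re_apply: "op_Re S x = (1/2::complex) *\<^sub>C (S x + adj S x)"
  unfolding op_Re_def ..

lemma point_bound:
  fixes B C :: "'a::chilbert_space \<Rightarrow> 'a"
  assumes hB: "hilbert_schmidt B" and hC: "hilbert_schmidt C"
    and a: "cmod a \<le> 1" and l1: "cmod l1 \<le> 1" and l2: "cmod l2 \<le> 1"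
  shows "hs_norm (op_Re (\<lambda>x. a *\<^sub>C (l1 *\<^sub>C B x + l2 *\<^sub>C C x)))
      \<le> sqrt (2 * ((hs_norm B)\<^sup>2 + (hs_norm C)\<^sup>2))"
proof -
  define S where "S = (\<lambda>x. a *\<^sub>C (l1 *\<^sub>C B x + l2 *\<^sub>C C x))"
  note cf = comb_facts[OF hB hC a l1 l2 S_def]
  note onb = hs_bundle(1)[OF hB]
  define NS where "NS = infsum (\<lambda>e. (norm (S e))\<^sup>2) some_onb"
  have hS: "((\<lambda>e. (norm (S e))\<^sup>2) has_sum NS) some_onb"
    using cf(2) unfolding NS_def hs_on_def by simp
  have hSa: "((\<lambda>e. (norm (adj S e))\<^sup>2) has_sum NS) some_onb"
    by (rule hs_transfer[OF onb onb cf(3) hS])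
  have hBC: "((\<lambda>x. 2 * ((norm (B x))\<^sup>2 + (norm (C x))\<^sup>2)) has_sum 2 * ((hs_norm B)\<^sup>2 + (hs_norm C)\<^sup>2)) some_onb"
    by (intro has_sum_cmult_right has_sum_add hs_bundle(5)[OF hB] hs_bundle(5)[OF hC])
  have NS_le: "NS \<le> 2 * ((hs_norm B)\<^sup>2 + (hs_norm C)\<^sup>2)"
    by (rule has_sum_mono[OF hS hBC cf(4)])
  have pwR: "(norm (op_Re S x))\<^sup>2 \<le> ((norm (S x))\<^sup>2 + (norm (adj S x))\<^sup>2) / 2" for x
  proof -
    have "norm (op_Re S x) = norm (S x + adj S x) / 2"
      unfolding op_Re_apply by (simp add: norm_scaleC)
    then have "(norm (op_Re S x))\<^sup>2 = (norm (S x + adj S x))\<^sup>2 / 4"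
      by (simp only: power_divide) simp
    then show ?thesis using norm_sq_add_le[of "S x" "adj S x"] by simp
  qed
  have hM: "((\<lambda>x. ((norm (S x))\<^sup>2 + (norm (adj S x))\<^sup>2) / 2) has_sum (NS + NS) / 2) some_onb"
    by (intro has_sum_divide_const has_sum_add hS hSa)
  have sR: "(\<lambda>x. (norm (op_Re S x))\<^sup>2) summable_on some_onb"
    by (rule summable_on_comparison_test[OF has_sum_imp_summable[OF hM]]) (use pwR in auto)
  have "infsum (\<lambda>x. (norm (op_Re S x))\<^sup>2) some_onb \<le> (NS + NS) / 2"
    by (rule has_sum_mono[OF has_sum_infsum[OF sR] hM pwR])
  also have "\<dots> \<le> 2 * ((hs_norm B)\<^sup>2 + (hs_norm C)\<^sup>2)" using NS_le by simp
  finally show ?thesis unfolding hs_norm_def S_def[symmetric]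
    by (rule real_sqrt_le_mono)
qed



theorem theorem3p1:
  fixes B C :: "'a::chilbert_space \<Rightarrow> 'a"
  assumes "hilbert_schmidt B" and "hilbert_schmidt C"
  shows "(w2e B C)\<^sup>2 \<ge>
     1/4 * cmod (trace (B \<circ> B) + trace (C \<circ> C) + 2 * trace (B \<circ> C))
     + 1/4 * ((hs_norm B)\<^sup>2 + (hs_norm C)\<^sup>2 + 2 * Re (trace (B \<circ> adj C)))"
proof -
  note hB = assms(1) and hC = assms(2)
  note onb = hs_bundle(1)[OF hB]
  note bB = hs_bundle(2)[OF hB] and bC = hs_bundle(2)[OF hC]
  note aB = hs_bundle(3)[OF hB] and aB' = hs_bundle(4)[OF hB]
  note aC = hs_bundle(3)[OF hC] and aC' = hs_bundle(4)[OF hC]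
  note nB = hs_bundle(5)[OF hB] and nC = hs_bundle(5)[OF hC]
  note sB = hs_bundle(6)[OF hB] and sBa = hs_bundle(7)[OF hB]
  note sC = hs_bundle(6)[OF hC] and sCa = hs_bundle(7)[OF hC]
  let ?E = "some_onb :: 'a set"
  obtain tBB where tBB: "((\<lambda>e. cinner e (B (B e))) has_sum tBB) ?E"
    using trace_swap[OF onb aB aB sB sBa] by blast
  obtain tCC where tCC: "((\<lambda>e. cinner e (C (C e))) has_sum tCC) ?E"
    using trace_swap[OF onb aC aC sC sCa] by blast
  obtain tBC where tBC1: "((\<lambda>e. cinner e (B (C e))) has_sum tBC) ?E"
    and tBC2: "((\<lambda>e. cinner e (C (B e))) has_sum tBC) ?E"
    using trace_swap[OF onb aB aC sB sCa] by blast
  obtain t2 where t21: "((\<lambda>e. cinner e (adj C (B e))) has_sum t2) ?E"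
    and t22: "((\<lambda>e. cinner e (B (adj C e))) has_sum t2) ?E"
    using trace_swap[OF onb aC' aB sCa sBa] by blast
  have trBB: "trace (B \<circ> B) = tBB" unfolding trace_def o_def using tBB by (rule infsumI)
  have trCC: "trace (C \<circ> C) = tCC" unfolding trace_def o_def using tCC by (rule infsumI)
  have trBC: "trace (B \<circ> C) = tBC" unfolding trace_def o_def using tBC1 by (rule infsumI)
  have trBCa: "trace (B \<circ> adj C) = t2" unfolding trace_def o_def using t22 by (rule infsumI)
  define Z where "Z = tBB + tCC + 2 * tBC"
  define \<theta> where "\<theta> = - Arg Z / 2"
  define l where "l = complex_of_real (1 / sqrt 2)"
  define ex where "ex = exp (\<i> * complex_of_real \<theta>)"
  define c where "c = ex * l"
  define S where "S = (\<lambda>x. ex *\<^sub>C (l *\<^sub>C B x + l *\<^sub>C C x))"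
  have cl: "cmod l = 1 / sqrt 2" unfolding l_def norm_of_real by simp
  have cl2: "(cmod l)\<^sup>2 = 1/2" unfolding cl by (simp add: power_divide)
  have l_le: "cmod l \<le> 1" unfolding cl by (simp add: divide_le_eq)
  have cex: "cmod ex = 1" unfolding ex_def by simp
  note cf = comb_facts[OF hB hC _ l_le l_le S_def]
  have bS: "bounded_clinear S" and aS: "adjoint_pair S (adj S)" and hsS: "hs_on ?E S"
    using cf cex by auto
  have Sc: "S x = c *\<^sub>C (B x + C x)" for x
    unfolding S_def c_def by (simp add: scaleC_add_right scaleC_scaleC)
  have P1: "cinner e (S (S e)) = c\<^sup>2 * (cinner e (B (B e)) + cinner e (C (C e)) + cinner e (B (C e)) + cinner e (C (B e)))" for e
    by (simp add: Sc bounded_clinear_add[OF bB] bounded_clinear_add[OF bC]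
        bounded_clinear_scaleC[OF bB] bounded_clinear_scaleC[OF bC]
        cinner_add_right cinner_scaleC_right power2_eq_square algebra_simps)
  have P2: "(norm (S e))\<^sup>2 = ((norm (B e))\<^sup>2 + (norm (C e))\<^sup>2 + 2 * Re (cinner e (adj C (B e)))) / 2" for e
  proof -
    have "cinner e (adj C (B e)) = cinner (C e) (B e)"
      using aC unfolding adjoint_pair_def by simp
    then have re: "Re (cinner e (adj C (B e))) = Re (cinner (B e) (C e))"
      by (metis cinner_commute complex_cnj_cnj cnj.sel(1))
    have "(norm (S e))\<^sup>2 = (cmod c)\<^sup>2 * (norm (B e + C e))\<^sup>2"
      unfolding Sc by (simp add: norm_scaleC power_mult_distrib)
    also have "(cmod c)\<^sup>2 = 1/2" unfolding c_def norm_mult cex using cl2 by simp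
    finally show ?thesis unfolding re norm_add_sq by simp
  qed
  have P3: "(norm (op_Re S e))\<^sup>2 = (norm (S e))\<^sup>2 / 4 + (norm (adj S e))\<^sup>2 / 4 + Re (cinner e (S (S e))) / 2" for e
  proof -
    have "cinner (S e) (adj S e) = cinner (S (S e)) e"
      using aS unfolding adjoint_pair_def by simp
    then have re: "Re (cinner (S e) (adj S e)) = Re (cinner e (S (S e)))"
      by (metis cinner_commute cnj.sel(1))
    have "norm (op_Re S e) = norm (S e + adj S e) / 2"
      unfolding op_Re_apply by (simp add: norm_scaleC)
    then have "(norm (op_Re S e))\<^sup>2 = (norm (S e + adj S e))\<^sup>2 / 4"
      by (simp only: power_divide) simp
    then show ?thesis unfolding norm_add_sq re by simp
  qed
  define NS where "NS = ((hs_norm B)\<^sup>2 + (hs_norm C)\<^sup>2 + 2 * Re t2) / 2"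
  have hS: "((\<lambda>e. (norm (S e))\<^sup>2) has_sum NS) ?E"
    unfolding P2 NS_def
    by (intro has_sum_divide_const has_sum_add nB nC has_sum_cmult_right has_sum_Re t21)
  have hSa: "((\<lambda>e. (norm (adj S e))\<^sup>2) has_sum NS) ?E"
    by (rule hs_transfer[OF onb onb aS hS])
  have hSS: "((\<lambda>e. cinner e (S (S e))) has_sum c\<^sup>2 * Z) ?E"
  proof -
    have "((\<lambda>e. c\<^sup>2 * (cinner e (B (B e)) + cinner e (C (C e)) + cinner e (B (C e)) + cinner e (C (B e))))
        has_sum c\<^sup>2 * (tBB + tCC + tBC + tBC)) ?E"
      by (intro has_sum_cmult_right has_sum_add tBB tCC tBC1 tBC2)
    moreover have "tBB + tCC + tBC + tBC = Z" unfolding Z_def by simp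
    ultimately show ?thesis unfolding P1 by simp
  qed
  define V where "V = NS / 4 + NS / 4 + Re (c\<^sup>2 * Z) / 2"
  have hR: "((\<lambda>e. (norm (op_Re S e))\<^sup>2) has_sum V) ?E"
    unfolding P3 V_def
    by (intro has_sum_divide_const has_sum_add hS hSa has_sum_Re hSS)
  have l2: "l\<^sup>2 = 1/2"
  proof -
    have "l\<^sup>2 = complex_of_real ((1/sqrt 2)\<^sup>2)" unfolding l_def by (rule of_real_power[symmetric])
    also have "(1/sqrt 2)\<^sup>2 = (1/2::real)" by (simp add: power_divide)
    finally show ?thesis by simp
  qed
  have c2: "c\<^sup>2 = ex\<^sup>2 / 2"
    unfolding c_def by (simp add: power_mult_distrib l2)
  have "Re (c\<^sup>2 * Z) = Re (ex\<^sup>2 * Z) / 2" unfolding c2 by simp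
  also have "Re (ex\<^sup>2 * Z) = cmod Z" unfolding ex_def \<theta>_def by (rule Re_rot)
  finally have V: "V = 1/4 * cmod Z + 1/4 * ((hs_norm B)\<^sup>2 + (hs_norm C)\<^sup>2 + 2 * Re t2)"
    unfolding V_def NS_def by simp
  have V0: "V \<ge> 0" using hR by (rule has_sum_nonneg) simp
  have hsR: "hs_norm (op_Re S) = sqrt V"
    unfolding hs_norm_def using hR by (simp add: infsumI)
  let ?A = "{(l1, l2, \<theta>::real). (cmod l1)\<^sup>2 + (cmod l2)\<^sup>2 \<le> (1::real)}"
  let ?f = "\<lambda>p. case p of (l1, l2, \<theta>) \<Rightarrow>
        hs_norm (op_Re (\<lambda>x. exp (\<i> * complex_of_real \<theta>) *\<^sub>C (l1 *\<^sub>C B x + l2 *\<^sub>C C x)))"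
  have mem: "(l, l, \<theta>) \<in> ?A" using cl2 by simp
  have fval: "?f (l, l, \<theta>) = sqrt V" unfolding hsR[symmetric] S_def ex_def by simp
  have bdd: "bdd_above (?f ` ?A)"
  proof (rule bdd_aboveI2)
    fix p assume "p \<in> ?A"
    then obtain l1 l2 t where p: "p = (l1, l2, t)" and le: "(cmod l1)\<^sup>2 + (cmod l2)\<^sup>2 \<le> 1" by blast
    have "(cmod l1)\<^sup>2 \<le> 1" "(cmod l2)\<^sup>2 \<le> 1" using le by (smt (verit) zero_le_power2)+
    then have "cmod l1 \<le> 1" "cmod l2 \<le> 1" by (simp_all add: power_le_one_iff abs_square_le_1)
    then show "?f p \<le> sqrt (2 * ((hs_norm B)\<^sup>2 + (hs_norm C)\<^sup>2))"
      unfolding p using point_bound[OF hB hC, of "exp (\<i> * complex_of_real t)" l1 l2] by simp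
  qed
  have "sqrt V \<le> w2e B C"
    unfolding w2e_def fval[symmetric] by (rule cSUP_upper[OF mem bdd])
  then have "(sqrt V)\<^sup>2 \<le> (w2e B C)\<^sup>2" using V0 by (intro power_mono) auto
  then have "V \<le> (w2e B C)\<^sup>2" using V0 by simp
  then show ?thesis unfolding V Z_def trBB trCC trBC trBCa .
qed

end
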